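(* There exist finite simple undirected graphs $G_1$, $G_2$ and an integer $\alpha \ge 1$ such that 1-WL does not distinguish $G_1$ and $G_2$ (for every $i \ge 0$ the multisets of 1-WL colours $\{\!\{ c^i_v : v \in V_1\}\!\}$ and $\{\!\{ c^i_v : v \in V_2\}\!\}$ coincide), but $G_1$ and $G_2$ are not $\textsc{Igel}$-equivalent for $\alpha$.
   Context: Graphs $G=(V,E)$ are finite, simple and undirected; $d_G(v)$ is the degree of $v$ in $G$, $l_G(u,v)$ the shortest-path distance, $\{\!\{\cdot\}\!\}$ denotes a multiset, and $\mathcal{N}^\alpha_G(v) = \{u \in V : l_G(u,v) \le \alpha\}$. The $\alpha$-depth ego-network $\mathcal{E}^\alpha_v$ of $v$ is the subgraph of $G$ induced by $\mathcal{N}^\alpha_G(v)$. 1-WL (colour refinement): fix an injective map $\mathrm{hash}$ from finite multisets to colours, used simultaneously for both graphs. Initially $c^0_v = \mathrm{hash}(\{\!\{ d_G(v)\}\!\})$, and for $i \ge 0$, $c^{i+1}_v = \mathrm{hash}(\{\!\{ c^i_u : u \in \mathcal{N}^1_G(v),\ u \ne v\}\!\})$. $\textsc{Igel}$ encoding with parameter $\alpha \ge 1$: $e^0_v = \{\!\{(0, d_G(v))\}\!\}$, and for $i = 1,\dots,\alpha$, $e^i_v = e^{i-1}_v \cup \{\!\{ (i, d_{\mathcal{E}^\alpha_v}(u)) : u \in \mathcal{N}^\alpha_G(v),\ l_G(u,v) = i\}\!\}$ (multiset union), where $d_{\mathcal{E}^\alpha_v}(u)$ is the degree of $u$ inside $\mathcal{E}^\alpha_v$.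 Two graphs $G_1=(V_1,E_1)$, $G_2=(V_2,E_2)$ are $\textsc{Igel}$-equivalent for $\alpha$ if $\{\!\{ e^\alpha_{v} : v \in V_1\}\!\} = \{\!\{ e^\alpha_{v} : v \in V_2\}\!\}$. *)

theory Defs
  imports Main "HOL-Library.Multiset" "HOL-Library.Extended_Nat"
begin

definition simple_graph :: "'a set \<Rightarrow> ('a \<Rightarrow> 'a \<Rightarrow> bool) \<Rightarrow> bool" where
  "simple_graph V E \<longleftrightarrow> finite V \<and> (\<forall>u v. E u v \<longrightarrow> E v u) \<and> (\<forall>v. \<not> E v v)
     \<and> (\<forall>u v. E u v \<longrightarrow> u \<in> V \<and> v \<in> V)"

definition deg :: "'a set \<Rightarrow> ('a \<Rightarrow> 'a \<Rightarrow> bool) \<Rightarrow> 'a \<Rightarrow> nat" where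
  "deg V E v = card {u \<in> V. E v u}"

fun reach :: "'a set \<Rightarrow> ('a \<Rightarrow> 'a \<Rightarrow> bool) \<Rightarrow> nat \<Rightarrow> 'a \<Rightarrow> 'a \<Rightarrow> bool" where
  "reach V E 0 u v = (u = v \<and> u \<in> V)"
| "reach V E (Suc k) u v = (reach V E k u v \<or> (\<exists>w. reach V E k u w \<and> E w v))"

definition gdist :: "'a set \<Rightarrow> ('a \<Rightarrow> 'a \<Rightarrow> bool) \<Rightarrow> 'a \<Rightarrow> 'a \<Rightarrow> enat" where
  "gdist V E u v = (if \<exists>k. reach V E k u v then enat (LEAST k. reach V E k u v) else \<infinity>)"

definition nbhd :: "'a set \<Rightarrow> ('a \<Rightarrow> 'a \<Rightarrow> bool) \<Rightarrow> nat \<Rightarrow> 'a \<Rightarrow> 'a set" where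
  "nbhd V E \<alpha> v = {u \<in> V. gdist V E u v \<le> enat \<alpha>}"

text \<open>Degree of u inside the alpha-depth ego-network of v (induced subgraph on nbhd).\<close>
definition ego_deg :: "'a set \<Rightarrow> ('a \<Rightarrow> 'a \<Rightarrow> bool) \<Rightarrow> nat \<Rightarrow> 'a \<Rightarrow> 'a \<Rightarrow> nat" where
  "ego_deg V E \<alpha> v u = card {w \<in> nbhd V E \<alpha> v. E u w}"

text \<open>1-WL colours, for a fixed (injective) hash from finite multisets to colours.\<close>
fun wl_col :: "(nat multiset \<Rightarrow> nat) \<Rightarrow> 'a set \<Rightarrow> ('a \<Rightarrow> 'a \<Rightarrow> bool) \<Rightarrow> nat \<Rightarrow> 'a \<Rightarrow> nat" where
  "wl_col h V E 0 v = h {# deg V E v #}"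
| "wl_col h V E (Suc i) v = h (image_mset (wl_col h V E i) (mset_set {u \<in> V. E v u}))"

fun igel_enc :: "'a set \<Rightarrow> ('a \<Rightarrow> 'a \<Rightarrow> bool) \<Rightarrow> nat \<Rightarrow> nat \<Rightarrow> 'a \<Rightarrow> (nat \<times> nat) multiset" where
  "igel_enc V E \<alpha> 0 v = {# (0, deg V E v) #}"
| "igel_enc V E \<alpha> (Suc i) v = igel_enc V E \<alpha> i v +
     image_mset (\<lambda>u. (Suc i, ego_deg V E \<alpha> v u))
       (mset_set {u \<in> nbhd V E \<alpha> v. gdist V E u v = enat (Suc i)})"

definition wl_equiv :: "(nat multiset \<Rightarrow> nat) \<Rightarrow> 'a set \<Rightarrow> ('a \<Rightarrow> 'a \<Rightarrow> bool)
    \<Rightarrow> 'b set \<Rightarrow> ('b \<Rightarrow> 'b \<Rightarrow> bool) \<Rightarrow> bool" where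
  "wl_equiv h V1 E1 V2 E2 \<longleftrightarrow>
     (\<forall>i. image_mset (wl_col h V1 E1 i) (mset_set V1) = image_mset (wl_col h V2 E2 i) (mset_set V2))"

definition igel_equiv :: "nat \<Rightarrow> 'a set \<Rightarrow> ('a \<Rightarrow> 'a \<Rightarrow> bool)
    \<Rightarrow> 'b set \<Rightarrow> ('b \<Rightarrow> 'b \<Rightarrow> bool) \<Rightarrow> bool" where
  "igel_equiv \<alpha> V1 E1 V2 E2 \<longleftrightarrow>
     image_mset (igel_enc V1 E1 \<alpha> \<alpha>) (mset_set V1) = image_mset (igel_enc V2 E2 \<alpha> \<alpha>) (mset_set V2)"

end

theory Submission
  imports Defs
begin

lemma filter_insert: "{u \<in> insert a A. P u} = (if P a then insert a {u \<in> A. P u} else {u \<in> A. P u})"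
  by auto

lemma filter_empty: "{u \<in> {}. P u} = {}" by auto

lemma lt6: "{..<(6::nat)} = {0,1,2,3,4,5}" by auto

lemma reach_mono: "reach V E k u v \<Longrightarrow> reach V E (k + m) u v"
  by (induction m) auto

lemma gdist_le1:
  "gdist V E u v \<le> enat 1 \<longleftrightarrow> reach V E 1 u v"
proof
  assume h: "gdist V E u v \<le> enat 1"
  then have ex: "\<exists>k. reach V E k u v" unfolding gdist_def by (auto split: if_splits)
  then have le: "(LEAST k. reach V E k u v) \<le> 1" using h unfolding gdist_def by auto
  have "reach V E (LEAST k. reach V E k u v) u v" using ex by (rule LeastI_ex)
  from reach_mono[OF this, of "1 - (LEAST k. reach V E k u v)"] le show "reach V E 1 u v" by simp
next
  assume h: "reach V E 1 u v"
  then have "(LEAST k. reach V E k u v) \<le> 1" by (rule Least_le)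
  moreover have "\<exists>k. reach V E k u v" using h by blast
  ultimately show "gdist V E u v \<le> enat 1" unfolding gdist_def by auto
qed

lemma gdist_eq1:
  "gdist V E u v = enat 1 \<longleftrightarrow> reach V E 1 u v \<and> \<not> reach V E 0 u v"
proof
  assume h: "gdist V E u v = enat 1"
  then have ex: "\<exists>k. reach V E k u v" unfolding gdist_def by (auto split: if_splits)
  then have le: "(LEAST k. reach V E k u v) = 1" using h unfolding gdist_def by auto
  have "reach V E (LEAST k. reach V E k u v) u v" using ex by (rule LeastI_ex)
  moreover have "\<not> reach V E 0 u v" using le not_less_Least[of 0 "\<lambda>k. reach V E k u v"] by auto
  ultimately show "reach V E 1 u v \<and> \<not> reach V E 0 u v" using le by simp
next
  assume h: "reach V E 1 u v \<and> \<not> reach V E 0 u v"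
  have "\<And>y. reach V E y u v \<Longrightarrow> 1 \<le> y"
  proof -
    fix y assume "reach V E y u v" then show "1 \<le> y" using h by (cases y) auto
  qed
  then have "(LEAST k. reach V E k u v) = 1"
    using h by (intro Least_equality) auto
  moreover have "\<exists>k. reach V E k u v" using h by blast
  ultimately show "gdist V E u v = enat 1" unfolding gdist_def by auto
qed

lemma nbhd1:
  assumes "simple_graph V E"
  shows "nbhd V E 1 v = {u \<in> V. u = v \<or> E v u}"
  using assms unfolding nbhd_def gdist_le1 simple_graph_def by auto

lemma sphere1:
  assumes "simple_graph V E"
  shows "{u \<in> nbhd V E 1 v. gdist V E u v = enat (Suc 0)} = {u \<in> V. E v u}"
  using assms gdist_eq1[of V E u v for u] unfolding nbhd1[OF assms]
  unfolding simple_graph_def One_nat_def[symmetric] gdist_eq1 by auto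

lemma igel1:
  assumes "simple_graph V E"
  shows "igel_enc V E 1 1 v = {# (0, deg V E v) #} +
     image_mset (\<lambda>u. (1, card {w \<in> {u \<in> V. u = v \<or> E v u}. E u w})) (mset_set {u \<in> V. E v u})"
  using sphere1[OF assms, of v] nbhd1[OF assms, of v]
  by (simp add: ego_deg_def)

lemma img_const: "image_mset (\<lambda>_. c) M = replicate_mset (size M) c"
  by (induction M) auto

fun cc :: "(nat multiset \<Rightarrow> nat) \<Rightarrow> nat \<Rightarrow> nat" where
  "cc h 0 = h {#2#}"
| "cc h (Suc i) = h (replicate_mset 2 (cc h i))"

lemma wl_regular:
  assumes "simple_graph V E" "\<And>v. v \<in> V \<Longrightarrow> deg V E v = 2"
  shows "v \<in> V \<Longrightarrow> wl_col h V E i v = cc h i"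
proof (induction i arbitrary: v)
  case 0 then show ?case using assms by simp
next
  case (Suc i)
  have fin: "finite {u \<in> V. E v u}" using assms(1) unfolding simple_graph_def by auto
  have "image_mset (wl_col h V E i) (mset_set {u \<in> V. E v u})
      = image_mset (\<lambda>_. cc h i) (mset_set {u \<in> V. E v u})"
    using Suc.IH fin by (intro image_mset_cong) auto
  also have "\<dots> = replicate_mset 2 (cc h i)"
    using assms(2)[OF Suc.prems] fin by (simp add: deg_def img_const)
  finally show ?case by simp
qed

lemma wl_equiv_regular:
  assumes "simple_graph V1 E1" "\<And>v. v \<in> V1 \<Longrightarrow> deg V1 E1 v = 2"
    "simple_graph V2 E2" "\<And>v. v \<in> V2 \<Longrightarrow> deg V2 E2 v = 2"
    "card V1 = card V2"
  shows "wl_equiv h V1 E1 V2 E2"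
proof -
  have f1: "finite V1" "finite V2" using assms unfolding simple_graph_def by auto
  show ?thesis unfolding wl_equiv_def
  proof
    fix i
    have "image_mset (wl_col h V1 E1 i) (mset_set V1) = image_mset (\<lambda>_. cc h i) (mset_set V1)"
      using wl_regular[OF assms(1,2)] f1 by (intro image_mset_cong) auto
    moreover have "image_mset (wl_col h V2 E2 i) (mset_set V2) = image_mset (\<lambda>_. cc h i) (mset_set V2)"
      using wl_regular[OF assms(3,4)] f1 by (intro image_mset_cong) auto
    ultimately show "image_mset (wl_col h V1 E1 i) (mset_set V1) = image_mset (wl_col h V2 E2 i) (mset_set V2)"
      using assms(5) f1 by (simp add: img_const)
  qed
qed

definition E1 :: "nat \<Rightarrow> nat \<Rightarrow> bool" where
  "E1 u v = (u < 6 \<and> v < 6 \<and> (v = (u + 1) mod 6 \<or> u = (v + 1) mod 6))"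

definition E2 :: "nat \<Rightarrow> nat \<Rightarrow> bool" where
  "E2 u v = (u < 6 \<and> v < 6 \<and> u \<noteq> v \<and> u div 3 = v div 3)"

lemma six: "(v::nat) < 6 \<Longrightarrow> v = 0 \<or> v = 1 \<or> v = 2 \<or> v = 3 \<or> v = 4 \<or> v = 5" by auto

lemma sg1: "simple_graph {..<6} E1" unfolding simple_graph_def E1_def by (auto dest!: six)
lemma sg2: "simple_graph {..<6} E2" unfolding simple_graph_def E2_def by auto


lemma deg1: assumes "v < 6" shows "deg {..<6} E1 v = 2"
  using six[OF assms] unfolding deg_def lt6 by (elim disjE; simp add: filter_insert E1_def del: insert_iff; (simp add: filter_insert E1_def del: insert_iff)?; simp)
lemma deg2: assumes "v < 6" shows "deg {..<6} E2 v = 2"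
  using six[OF assms] unfolding deg_def lt6 by (elim disjE; simp add: filter_insert E2_def del: insert_iff; (simp add: filter_insert E2_def del: insert_iff)?; simp)

lemma ego1: assumes "v < 6" "u < 6" "E1 v u"
  shows "card {w \<in> {x \<in> {..<6}. x = v \<or> E1 v x}. E1 u w} = 1"
  using six[OF assms(1)] six[OF assms(2)] assms(3) unfolding lt6
  by (elim disjE; simp add: filter_insert E1_def del: insert_iff; simp)
lemma ego2: assumes "v < 6" "u < 6" "E2 v u"
  shows "card {w \<in> {x \<in> {..<6}. x = v \<or> E2 v x}. E2 u w} = 2"
  using six[OF assms(1)] six[OF assms(2)] assms(3) unfolding lt6
  by (elim disjE; simp add: filter_insert E2_def del: insert_iff; simp)

lemma enc1: assumes "v < 6" shows "igel_enc {..<6} E1 1 1 v = {#(0,2),(1,1),(1,1)#}"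
proof -
  have "image_mset (\<lambda>u. (1::nat, card {w \<in> {x \<in> {..<6}. x = v \<or> E1 v x}. E1 u w})) (mset_set {u \<in> {..<6}. E1 v u})
     = image_mset (\<lambda>_. (1,1)) (mset_set {u \<in> {..<6}. E1 v u})"
    using ego1[OF assms] by (intro image_mset_cong) auto
  then show ?thesis unfolding igel1[OF sg1] using deg1[OF assms]
    by (simp add: img_const deg_def numeral_2_eq_2)
qed
lemma enc2: assumes "v < 6" shows "igel_enc {..<6} E2 1 1 v = {#(0,2),(1,2),(1,2)#}"
proof -
  have "image_mset (\<lambda>u. (1::nat, card {w \<in> {x \<in> {..<6}. x = v \<or> E2 v x}. E2 u w})) (mset_set {u \<in> {..<6}. E2 v u})
     = image_mset (\<lambda>_. (1,2)) (mset_set {u \<in> {..<6}. E2 v u})"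
    using ego2[OF assms] by (intro image_mset_cong) auto
  then show ?thesis unfolding igel1[OF sg2] using deg2[OF assms]
    by (simp add: img_const deg_def numeral_2_eq_2)
qed

theorem lemma2:
  fixes hash :: "nat multiset \<Rightarrow> nat"
  assumes "inj hash"
  shows "\<exists>(V1 :: nat set) E1 (V2 :: nat set) E2 (\<alpha> :: nat).
           simple_graph V1 E1 \<and> simple_graph V2 E2 \<and> \<alpha> \<ge> 1 \<and>
           wl_equiv hash V1 E1 V2 E2 \<and> \<not> igel_equiv \<alpha> V1 E1 V2 E2"
proof (intro exI conjI)
  show "simple_graph {..<6} E1" by (rule sg1)
  show "simple_graph {..<6} E2" by (rule sg2)
  show "(1::nat) \<ge> 1" by simp
  show "wl_equiv hash {..<6} E1 {..<6} E2"
    using wl_equiv_regular[OF sg1 _ sg2] deg1 deg2 by auto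
  have a: "image_mset (igel_enc {..<6} E1 1 1) (mset_set {..<6}) = image_mset (\<lambda>_. {#(0,2),(1,1),(1,1)#}) (mset_set {..<(6::nat)})"
    using enc1 by (intro image_mset_cong) auto
  have b: "image_mset (igel_enc {..<6} E2 1 1) (mset_set {..<6}) = image_mset (\<lambda>_. {#(0,2),(1,2),(1,2)#}) (mset_set {..<(6::nat)})"
    using enc2 by (intro image_mset_cong) auto
  show "\<not> igel_equiv 1 {..<6} E1 {..<6} E2"
    unfolding igel_equiv_def a b img_const
    by (auto dest!: arg_cong[where f=set_mset])
qed

end
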